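(* In the situation below, for all $g,h\in G$ the matrix $Y(gh)^{-1}Y(g)Y(h)$ lies in $\iota(E^\times\cdot 1_A)$, so there is a unique $\alpha(g,h)\in E^\times$ with $Y(g)Y(h)=Y(gh)\iota(\alpha(g,h)1_A)$. Letting $G$ act on $E$ by $z^g:=z^{\sigma_g}$, the function $\alpha:G\times G\to E^\times$ is a factor set, i.e. $\alpha(gh,k)\alpha(g,h)^k=\alpha(g,hk)\alpha(h,k)$ for all $g,h,k\in G$.
   Context: $p$ prime; $F$ a sufficiently large finite field of characteristic $p$ (residue field of a $p$-modular system), $\mathcal{H}$ a group of automorphisms of the $p$-modular system acting on $F$ and inducing all automorphisms of $F$. $(G,N,\theta)_{\mathcal{H}}$ is a modular $\mathcal{H}$-triple ($N\trianglelefteq G$ finite, $\theta\in\mathrm{IBr}(N)$ with $G$-stable $\mathcal{H}$-orbit), $E=\mathbb{F}_p[\theta]$ the subfield of $F$ generated by the reductions of the values of $\theta$, $m=\theta(1)$, $s=[E:\mathbb{F}_p]$, $X:N\to\mathrm{GL}_m(E)$ a representation affording $\theta$. For $g\in G$, $\sigma_g\in\mathrm{Gal}(E/\mathbb{F}_p)$ is the unique element such that $n\mapsto X(gng^{-1})^{\sigma_g}$ affords $\theta$; $T_g\in\mathrm{GL}_m(E)$ satisfies $X(gng^{-1})^{\sigma_g}=T_gX(n)T_g^{-1}$; $A=\mathrm{M}_m(E)$ is a $G$-algebra via $x^g=T_g^{-1}x^{\sigma_g}T_g$. $\iota:A\to\mathrm{M}_{ms}(\mathbb{F}_p)$ is a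 unitary $\mathbb{F}_p$-algebra embedding and $Y:G\to\mathrm{GL}_{ms}(\mathbb{F}_p)$ satisfies: $Y(g)^{-1}\iota(x)Y(g)=\iota(x^g)$ ($x\in A,g\in G$); $Y(n)=\iota(X(n))$ ($n\in N$); $Y(gn)=Y(g)Y(n)$, $Y(ng)=Y(n)Y(g)$ ($n\in N,g\in G$). *)

theory Defs
  imports "Jordan_Normal_Form.Matrix" "HOL-Algebra.Coset"
begin

definition mat_tr :: "'a::comm_ring_1 mat \<Rightarrow> 'a" where
  "mat_tr M = (\<Sum>i<dim_row M. M $$ (i,i))"

definition is_subfield :: "'a::field set \<Rightarrow> bool" where
  "is_subfield K \<longleftrightarrow> 0 \<in> K \<and> 1 \<in> K \<and>
     (\<forall>a\<in>K. \<forall>b\<in>K. a + b \<in> K \<and> a - b \<in> K \<and> a * b \<in> K) \<and>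
     (\<forall>a\<in>K. inverse a \<in> K)"

text \<open>Field automorphisms of E (= elements of Gal(E/F_p) when E is finite of char p).\<close>
definition field_aut :: "('a::field \<Rightarrow> 'a) \<Rightarrow> bool" where
  "field_aut f \<longleftrightarrow> bij f \<and> (\<forall>a b. f (a + b) = f a + f b) \<and>
     (\<forall>a b. f (a * b) = f a * f b) \<and> f 1 = 1"

definition is_rep :: "('g, 'b) monoid_scheme \<Rightarrow> 'g set \<Rightarrow> nat \<Rightarrow> ('g \<Rightarrow> 'a::field mat) \<Rightarrow> bool" where
  "is_rep G N m X \<longleftrightarrow> (\<forall>n\<in>N. X n \<in> carrier_mat m m \<and> invertible_mat (X n)) \<and>
     X \<one>\<^bsub>G\<^esub> = 1\<^sub>m m \<and> (\<forall>a\<in>N. \<forall>b\<in>N. X (a \<otimes>\<^bsub>G\<^esub> b) = X a * X b)"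

text \<open>Absolute irreducibility of X (irreducibility over the splitting field F, hence over
  every extension): by Burnside's theorem, the E-span of X(N) is all of M_m(E).\<close>
definition abs_irreducible :: "'g set \<Rightarrow> nat \<Rightarrow> ('g \<Rightarrow> 'a::field mat) \<Rightarrow> bool" where
  "abs_irreducible N m X \<longleftrightarrow> (\<forall>M \<in> carrier_mat m m. \<exists>c :: 'g \<Rightarrow> 'a.
      \<forall>i<m. \<forall>j<m. M $$ (i,j) = (\<Sum>n\<in>N. c n * X n $$ (i,j)))"

end

theory Submission
  imports Defs
begin

lemma mat_eq_by_vec:
  fixes A B :: "'a::comm_ring_1 mat"
  assumes A: "A \<in> carrier_mat n k" and B: "B \<in> carrier_mat n k"
    and h: "\<And>v. v \<in> carrier_vec k \<Longrightarrow> A *\<^sub>v v = B *\<^sub>v v"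
  shows "A = B"
proof (rule eq_matI)
  fix i j assume i: "i < dim_row B" and j: "j < dim_col B"
  have "(A *\<^sub>v unit_vec k j) $ i = (B *\<^sub>v unit_vec k j) $ i" using h[of "unit_vec k j"] by simp
  then show "A $$ (i, j) = B $$ (i, j)" using A B i j by simp
qed (use A B in auto)

lemma card_carrier_vec:
  "card (carrier_vec n :: 'a::finite vec set) = card (UNIV :: 'a set) ^ n"
proof -
  have "bij_betw (\<lambda>v. restrict (\<lambda>i. v $ i) {..<n}) (carrier_vec n :: 'a vec set) (PiE {..<n} (\<lambda>_. UNIV))"
  proof (rule bij_betwI[where g = "\<lambda>f. vec n f"])
    show "(\<lambda>v. restrict (($) v) {..<n}) \<in> (carrier_vec n :: 'a vec set) \<rightarrow> {..<n} \<rightarrow>\<^sub>E UNIV" by auto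
    show "vec n \<in> ({..<n} \<rightarrow>\<^sub>E (UNIV :: 'a set)) \<rightarrow> carrier_vec n" by auto
    show "vec n (restrict (($) x) {..<n}) = x" if "x \<in> carrier_vec n" for x :: "'a vec"
      using that by (intro eq_vecI) auto
    show "restrict (($) (vec n y)) {..<n} = y" if "y \<in> {..<n} \<rightarrow>\<^sub>E (UNIV :: 'a set)" for y
      using that by (auto simp: fun_eq_iff PiE_def extensional_def)
  qed
  then have "card (carrier_vec n :: 'a vec set) = card (PiE {..<n} (\<lambda>_. UNIV :: 'a set))"
    by (rule bij_betw_same_card)
  also have "\<dots> = card (UNIV :: 'a set) ^ n" by (simp add: card_PiE)
  finally show ?thesis .
qed

lemma mat_vec_zero: "A \<in> carrier_mat n k \<Longrightarrow> A *\<^sub>v 0\<^sub>v k = 0\<^sub>v n"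
  by (intro eq_vecI) auto
lemma zero_mat_vec: "v \<in> carrier_vec k \<Longrightarrow> 0\<^sub>m n k *\<^sub>v v = 0\<^sub>v n"
  by (intro eq_vecI) auto

primrec Fsum :: "(nat \<Rightarrow> 'a::semiring_0 mat) \<Rightarrow> nat \<Rightarrow> nat \<Rightarrow> (nat \<Rightarrow> 'a vec) \<Rightarrow> 'a vec" where
  "Fsum Q n 0 w = 0\<^sub>v n"
| "Fsum Q n (Suc k) w = Fsum Q n k w + Q k *\<^sub>v w k"

locale emb =
  fixes \<iota> :: "'e::{finite,field} mat \<Rightarrow> 'f::{finite,field} mat" and m s :: nat
  assumes car: "\<And>x. x \<in> carrier_mat m m \<Longrightarrow> \<iota> x \<in> carrier_mat (m * s) (m * s)"
    and add: "\<And>x y. x \<in> carrier_mat m m \<Longrightarrow> y \<in> carrier_mat m m \<Longrightarrow> \<iota> (x + y) = \<iota> x + \<iota> y"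
    and mult: "\<And>x y. x \<in> carrier_mat m m \<Longrightarrow> y \<in> carrier_mat m m \<Longrightarrow> \<iota> (x * y) = \<iota> x * \<iota> y"
    and one: "\<iota> (1\<^sub>m m) = 1\<^sub>m (m * s)"
begin

lemma zero: "\<iota> (0\<^sub>m m m) = 0\<^sub>m (m*s) (m*s)"
proof -
  have c: "\<iota> (0\<^sub>m m m) \<in> carrier_mat (m*s) (m*s)" by (rule car) auto
  have "\<iota> (0\<^sub>m m m) = \<iota> (0\<^sub>m m m + 0\<^sub>m m m)" by simp
  also have "\<dots> = \<iota> (0\<^sub>m m m) + \<iota> (0\<^sub>m m m)" by (rule add) auto
  finally have h: "\<iota> (0\<^sub>m m m) + \<iota> (0\<^sub>m m m) = \<iota> (0\<^sub>m m m)" by simp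
  show ?thesis
  proof (rule eq_matI)
    fix i j assume "i < dim_row (0\<^sub>m (m * s) (m * s) :: 'f mat)" "j < dim_col (0\<^sub>m (m * s) (m * s) :: 'f mat)"
    then have "(\<iota> (0\<^sub>m m m) + \<iota> (0\<^sub>m m m)) $$ (i,j) = \<iota> (0\<^sub>m m m) $$ (i,j)" using h by simp
    then have "\<iota> (0\<^sub>m m m) $$ (i,j) + \<iota> (0\<^sub>m m m) $$ (i,j) = \<iota> (0\<^sub>m m m) $$ (i,j)"
      using c \<open>i < _\<close> \<open>j < _\<close> by simp
    then have "\<iota> (0\<^sub>m m m) $$ (i,j) = 0" by (metis add_cancel_right_right)
    then show "\<iota> (0\<^sub>m m m) $$ (i,j) = 0\<^sub>m (m * s) (m * s) $$ (i,j)" using c \<open>i < _\<close> \<open>j < _\<close> by simp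
  qed (use c in auto)
qed

lemma minus: assumes x: "x \<in> carrier_mat m m" and y: "y \<in> carrier_mat m m"
  shows "\<iota> (x - y) = \<iota> x - \<iota> y"
proof -
  have "x - y + y = x" using x y by (intro eq_matI) auto
  moreover have "x - y \<in> carrier_mat m m" using x y by (simp add: minus_carrier_mat)
  ultimately have "\<iota> x = \<iota> (x - y) + \<iota> y" using add[of "x - y" y] y by metis
  moreover have "\<iota> (x - y) \<in> carrier_mat (m*s) (m*s)" "\<iota> y \<in> carrier_mat (m*s) (m*s)"
    using car[OF minus_carrier_mat[OF y]] car[OF y] by auto
  ultimately show ?thesis by (intro eq_matI) auto
qed

definition E :: "nat \<Rightarrow> nat \<Rightarrow> 'e mat" where
  "E i j = mat m m (\<lambda>(a,b). if a = i \<and> b = j then 1 else 0)"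
definition sc :: "'e \<Rightarrow> 'e mat" where "sc c = c \<cdot>\<^sub>m 1\<^sub>m m"
definition Q :: "nat \<Rightarrow> nat \<Rightarrow> 'f mat" where "Q i j = \<iota> (E i j)"
definition D :: "nat \<Rightarrow> 'e mat" where
  "D k = mat m m (\<lambda>(a,b). if a = b \<and> a < k then 1 else 0)"

lemma E_car[simp]: "E i j \<in> carrier_mat m m" by (simp add: E_def)
lemma sc_car[simp]: "sc c \<in> carrier_mat m m" by (simp add: sc_def)
lemma D_car[simp]: "D k \<in> carrier_mat m m" by (simp add: D_def)
lemma Q_car[simp]: "Q i j \<in> carrier_mat (m*s) (m*s)" by (simp add: Q_def car)
lemma isc_car[simp]: "\<iota> (sc c) \<in> carrier_mat (m*s) (m*s)" by (simp add: car)

lemma Qv_car[simp]: "v \<in> carrier_vec (m*s) \<Longrightarrow> Q i j *\<^sub>v v \<in> carrier_vec (m*s)"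
  by (rule mult_mat_vec_carrier[OF Q_car])
lemma iscv_car[simp]: "v \<in> carrier_vec (m*s) \<Longrightarrow> \<iota> (sc c) *\<^sub>v v \<in> carrier_vec (m*s)"
  by (rule mult_mat_vec_carrier[OF isc_car])

lemma E_mult: assumes "j < m"
  shows "E i j * E k l = (if j = k then E i l else 0\<^sub>m m m)"
proof (rule eq_matI)
  fix a b assume a: "a < dim_row (if j = k then E i l else 0\<^sub>m m m)" and b: "b < dim_col (if j = k then E i l else 0\<^sub>m m m)"
  then have a': "a < m" and b': "b < m" by (auto simp: E_def split: if_splits)
  have "(E i j * E k l) $$ (a,b) = (\<Sum>t\<in>{0..<m}. (if a = i \<and> t = j then 1 else 0) * (if t = k \<and> b = l then 1 else 0))"
    using a' b' by (simp add: E_def scalar_prod_def)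
  also have "\<dots> = (\<Sum>t\<in>{0..<m}. if t = j then (if a = i \<and> j = k \<and> b = l then 1 else 0) else 0)"
    by (rule sum.cong) auto
  also have "\<dots> = (if a = i \<and> j = k \<and> b = l then 1 else 0)" using assms by simp
  finally show "(E i j * E k l) $$ (a,b) = (if j = k then E i l else 0\<^sub>m m m) $$ (a,b)"
    using a' b' by (auto simp: E_def)
qed (auto simp: E_def)

lemma Q_mult: assumes "j < m"
  shows "Q i j * Q k l = (if j = k then Q i l else 0\<^sub>m (m*s) (m*s))"
  using assms by (simp add: Q_def mult[symmetric] E_mult zero)

lemma sc_comm: assumes "M \<in> carrier_mat m m" shows "sc c * M = M * sc c"
  using assms unfolding sc_def
  by (simp add: mult_smult_assoc_mat[of _ m m _ m] mult_smult_distrib[of _ m m _ m])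

lemma isc_comm: assumes "M \<in> carrier_mat m m" shows "\<iota> (sc c) * \<iota> M = \<iota> M * \<iota> (sc c)"
  using assms by (simp add: mult[symmetric] sc_comm)

lemma sc_mult: "sc a * sc b = sc (a * b)"
proof -
  have "sc a * sc b = a \<cdot>\<^sub>m (1\<^sub>m m * sc b)" by (simp add: sc_def mult_smult_assoc_mat[of _ m m _ m])
  also have "\<dots> = a \<cdot>\<^sub>m (b \<cdot>\<^sub>m 1\<^sub>m m)" by (simp add: sc_def)
  also have "\<dots> = sc (a * b)" unfolding sc_def by (intro eq_matI) auto
  finally show ?thesis .
qed

lemma D_0: "D 0 = 0\<^sub>m m m" by (intro eq_matI) (auto simp: D_def)
lemma D_Suc: "D (Suc k) = D k + E k k" by (intro eq_matI) (auto simp: D_def E_def)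
lemma D_m: "D m = 1\<^sub>m m" by (intro eq_matI) (auto simp: D_def)

definition V :: "'f vec set" where "V = carrier_vec (m*s)"
definition W :: "'f vec set" where "W = {w \<in> V. Q 0 0 *\<^sub>v w = w}"

abbreviation F where "F \<equiv> Fsum (\<lambda>k. Q k 0) (m*s)"

lemma F_car: "(\<And>i. i < k \<Longrightarrow> w i \<in> V) \<Longrightarrow> F k w \<in> V"
  by (induction k) (auto simp: V_def intro!: add_carrier_vec mult_mat_vec_carrier[of _ "m*s" "m*s"])

lemma F_cong: "(\<And>i. i < k \<Longrightarrow> w i = w' i) \<Longrightarrow> F k w = F k w'"
  by (induction k) auto

lemma F_Q: assumes "\<And>i. i < k \<Longrightarrow> w i \<in> W" "j < m" "k \<le> m"
  shows "Q 0 j *\<^sub>v F k w = (if j < k then w j else 0\<^sub>v (m*s))"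
  using assms
proof (induction k)
  case 0 then show ?case by (simp add: mat_vec_zero)
next
  case (Suc k)
  have wV: "\<And>i. i < k \<Longrightarrow> w i \<in> V" using Suc.prems(1) by (auto simp: W_def)
  have wk: "w k \<in> W" using Suc.prems(1) by auto
  then have wkV: "w k \<in> carrier_vec (m*s)" and wkQ: "Q 0 0 *\<^sub>v w k = w k" by (auto simp: W_def V_def)
  have Fc: "F k w \<in> carrier_vec (m*s)" using F_car[of k w] wV by (auto simp: V_def)
  have "Q 0 j *\<^sub>v F (Suc k) w = Q 0 j *\<^sub>v F k w + Q 0 j *\<^sub>v (Q k 0 *\<^sub>v w k)"
    using mult_add_distrib_mat_vec[OF Q_car Fc mult_mat_vec_carrier[OF Q_car wkV]] by simp
  also have "Q 0 j *\<^sub>v (Q k 0 *\<^sub>v w k) = (Q 0 j * Q k 0) *\<^sub>v w k"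
    using wkV by (simp add: assoc_mult_mat_vec[of _ "m*s" "m*s" _ "m*s"])
  also have "\<dots> = (if j = k then w k else 0\<^sub>v (m*s))"
    using Suc.prems wkQ wkV by (auto simp: Q_mult)
  finally show ?case using Suc wkV wV[of j] by (auto simp: V_def)
qed

lemma F_decomp: assumes v: "v \<in> V" shows "k \<le> m \<Longrightarrow> F k (\<lambda>i. Q 0 i *\<^sub>v v) = \<iota> (D k) *\<^sub>v v"
proof (induction k)
  case 0 then show ?case using v by (simp add: D_0 zero V_def zero_mat_vec)
next
  case (Suc k)
  have vc: "v \<in> carrier_vec (m*s)" using v by (simp add: V_def)
  have "F (Suc k) (\<lambda>i. Q 0 i *\<^sub>v v) = \<iota> (D k) *\<^sub>v v + Q k 0 *\<^sub>v (Q 0 k *\<^sub>v v)" using Suc by simp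
  also have "Q k 0 *\<^sub>v (Q 0 k *\<^sub>v v) = (Q k 0 * Q 0 k) *\<^sub>v v"
    using vc by (simp add: assoc_mult_mat_vec[of _ "m*s" "m*s" _ "m*s"])
  also have "Q k 0 * Q 0 k = Q k k" using Suc.prems by (simp add: Q_mult)
  also have "\<iota> (D k) *\<^sub>v v + Q k k *\<^sub>v v = (\<iota> (D k) + Q k k) *\<^sub>v v"
    using vc car[of "D k"] by (simp add: add_mult_distrib_mat_vec[of _ "m*s" "m*s"])
  also have "\<iota> (D k) + Q k k = \<iota> (D (Suc k))" by (simp add: D_Suc add Q_def)
  finally show ?case .
qed

lemma v_decomp: "v \<in> V \<Longrightarrow> F m (\<lambda>i. Q 0 i *\<^sub>v v) = v"
  using F_decomp[of v m] by (simp add: D_m one V_def)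


lemma W_sub: "W \<subseteq> V" by (auto simp: W_def)

lemma QW: assumes v: "v \<in> V" shows "Q 0 i *\<^sub>v v \<in> W"
proof -
  have vc: "v \<in> carrier_vec (m*s)" using v by (simp add: V_def)
  have "Q 0 0 *\<^sub>v (Q 0 i *\<^sub>v v) = (Q 0 0 * Q 0 i) *\<^sub>v v"
    using vc by (simp add: assoc_mult_mat_vec[of _ "m*s" "m*s" _ "m*s"])
  also have "Q 0 0 * Q 0 i = Q 0 i"
  proof (cases "m = 0")
    case True
    then show ?thesis using Q_car[of 0 0] Q_car[of 0 i] by (intro eq_matI) auto
  next
    case False then show ?thesis by (simp add: Q_mult)
  qed
  finally show ?thesis using vc by (auto simp: W_def V_def)
qed

lemma bij_phi: "bij_betw (\<lambda>v. restrict (\<lambda>i. Q 0 i *\<^sub>v v) {..<m}) V (PiE {..<m} (\<lambda>_. W))"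
proof (rule bij_betwI[where g = "\<lambda>w. F m w"])
  show "(\<lambda>v. restrict (\<lambda>i. Q 0 i *\<^sub>v v) {..<m}) \<in> V \<rightarrow> {..<m} \<rightarrow>\<^sub>E W"
    using QW by auto
  show "(\<lambda>w. F m w) \<in> ({..<m} \<rightarrow>\<^sub>E W) \<rightarrow> V"
    using F_car W_sub by (auto simp: PiE_def Pi_def)
  show "F m (restrict (\<lambda>i. Q 0 i *\<^sub>v x) {..<m}) = x" if "x \<in> V" for x
  proof -
    have "F m (restrict (\<lambda>i. Q 0 i *\<^sub>v x) {..<m}) = F m (\<lambda>i. Q 0 i *\<^sub>v x)"
      by (rule F_cong) auto
    then show ?thesis using v_decomp[OF that] by simp
  qed
  show "restrict (\<lambda>i. Q 0 i *\<^sub>v F m y) {..<m} = y" if y: "y \<in> {..<m} \<rightarrow>\<^sub>E W" for y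
  proof
    fix i show "restrict (\<lambda>i. Q 0 i *\<^sub>v F m y) {..<m} i = y i"
    proof (cases "i < m")
      case True
      have "Q 0 i *\<^sub>v F m y = y i" using F_Q[of m y i] y True by auto
      then show ?thesis using True by simp
    next
      case False then show ?thesis using y by (auto simp: PiE_def extensional_def)
    qed
  qed
qed

lemma card_W: "card W ^ m = card V"
proof -
  have "card V = card (PiE {..<m} (\<lambda>_. W))" by (rule bij_betw_same_card[OF bij_phi])
  also have "\<dots> = card W ^ m" by (simp add: card_PiE)
  finally show ?thesis by simp
qed

lemma agree:
  assumes C1: "C1 \<in> carrier_mat (m*s) (m*s)" and C2: "C2 \<in> carrier_mat (m*s) (m*s)"
    and c1: "\<And>M. M \<in> carrier_mat m m \<Longrightarrow> C1 * \<iota> M = \<iota> M * C1"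
    and c2: "\<And>M. M \<in> carrier_mat m m \<Longrightarrow> C2 * \<iota> M = \<iota> M * C2"
    and onW: "\<And>w. w \<in> W \<Longrightarrow> C1 *\<^sub>v w = C2 *\<^sub>v w"
  shows "C1 = C2"
proof -
  have gen: "(\<And>i. i < k \<Longrightarrow> w i \<in> W) \<Longrightarrow> C1 *\<^sub>v F k w = C2 *\<^sub>v F k w" for k w
  proof (induction k)
    case 0 then show ?case using C1 C2 by (simp add: mat_vec_zero)
  next
    case (Suc k)
    have wV: "\<And>i. i < k \<Longrightarrow> w i \<in> V" using Suc.prems W_sub by auto
    have Fc: "F k w \<in> carrier_vec (m*s)" using F_car[of k w] wV by (auto simp: V_def)
    have wk: "w k \<in> W" using Suc.prems by auto
    then have wkc: "w k \<in> carrier_vec (m*s)" by (auto simp: W_def V_def)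
    have Qc: "Q k 0 *\<^sub>v w k \<in> carrier_vec (m*s)" using wkc by simp
    have key: "C *\<^sub>v (Q k 0 *\<^sub>v w k) = Q k 0 *\<^sub>v (C *\<^sub>v w k)"
      if C: "C \<in> carrier_mat (m*s) (m*s)" and cc: "\<And>M. M \<in> carrier_mat m m \<Longrightarrow> C * \<iota> M = \<iota> M * C" for C
    proof -
      have "C *\<^sub>v (Q k 0 *\<^sub>v w k) = (C * Q k 0) *\<^sub>v w k"
        using C wkc by (simp add: assoc_mult_mat_vec[of _ "m*s" "m*s" _ "m*s"])
      also have "C * Q k 0 = Q k 0 * C" using cc[of "E k 0"] by (simp add: Q_def)
      also have "(Q k 0 * C) *\<^sub>v w k = Q k 0 *\<^sub>v (C *\<^sub>v w k)"
        using C wkc by (simp add: assoc_mult_mat_vec[of _ "m*s" "m*s" _ "m*s"])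
      finally show ?thesis .
    qed
    have "C1 *\<^sub>v F (Suc k) w = C1 *\<^sub>v F k w + C1 *\<^sub>v (Q k 0 *\<^sub>v w k)"
      using mult_add_distrib_mat_vec[OF C1 Fc Qc] by simp
    also have "\<dots> = C2 *\<^sub>v F k w + C2 *\<^sub>v (Q k 0 *\<^sub>v w k)"
      using Suc key[OF C1 c1] key[OF C2 c2] onW[OF wk] by auto
    also have "\<dots> = C2 *\<^sub>v F (Suc k) w"
      using mult_add_distrib_mat_vec[OF C2 Fc Qc] by simp
    finally show ?case .
  qed
  show ?thesis
  proof (rule mat_eq_by_vec[OF C1 C2])
    fix v :: "'f vec" assume "v \<in> carrier_vec (m*s)"
    then have v: "v \<in> V" by (simp add: V_def)
    have "C1 *\<^sub>v F m (\<lambda>i. Q 0 i *\<^sub>v v) = C2 *\<^sub>v F m (\<lambda>i. Q 0 i *\<^sub>v v)"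
      by (rule gen) (use QW[OF v] in auto)
    then show "C1 *\<^sub>v v = C2 *\<^sub>v v" using v_decomp[OF v] by simp
  qed
qed

lemma sc_one: "sc 1 = 1\<^sub>m m" unfolding sc_def by (intro eq_matI) auto
lemma sc_minus: "sc (a - b) = sc a - sc b" unfolding sc_def by (intro eq_matI) (auto simp: algebra_simps)

lemma central:
  assumes cardE: "card (UNIV::'e set) = card (UNIV::'f set) ^ s" and m0: "m > 0"
    and Zc: "Z \<in> carrier_mat (m*s) (m*s)"
    and Zcomm: "\<And>M. M \<in> carrier_mat m m \<Longrightarrow> Z * \<iota> M = \<iota> M * Z"
  shows "\<exists>c. Z = \<iota> (sc c)"
proof -
  have cV: "card V = card (UNIV::'f set) ^ (m*s)" by (simp add: V_def card_carrier_vec)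
  also have "\<dots> = (card (UNIV::'f set) ^ s) ^ m" by (simp add: power_mult[symmetric] mult.commute)
  finally have "card W ^ m = card (UNIV::'e set) ^ m" using card_W cardE by simp
  then have cW: "card W = card (UNIV::'e set)"
    by (rule power_eq_imp_eq_base) (use m0 in auto)
  have fV: "finite V" using cV by (intro card_ge_0_finite) (simp add: finite_UNIV_card_ge_0)
  then have fW: "finite W" using W_sub finite_subset by blast
  have "card {0, 1::'e} \<le> card (UNIV::'e set)" by (rule card_mono) auto
  then have two: "2 \<le> card W" using cW by simp
  obtain v0 where v0W: "v0 \<in> W" and nz: "v0 \<noteq> 0\<^sub>v (m*s)"
  proof (rule ccontr)
    assume "\<not> thesis"
    with that have "W \<subseteq> {0\<^sub>v (m*s)}" by auto
    then have "card W \<le> card {0\<^sub>v (m*s) :: 'f vec}" by (intro card_mono) auto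
    then have "card W \<le> 1" by simp
    with two show False by simp
  qed
  have v0c: "v0 \<in> carrier_vec (m*s)" using v0W by (auto simp: W_def V_def)
  define f where "f c = \<iota> (sc c) *\<^sub>v v0" for c
  have fin: "f c \<in> W" for c
  proof -
    have "Q 0 0 *\<^sub>v f c = (Q 0 0 * \<iota> (sc c)) *\<^sub>v v0"
      unfolding f_def using v0c by (simp add: assoc_mult_mat_vec[of _ "m*s" "m*s" _ "m*s"])
    also have "Q 0 0 * \<iota> (sc c) = \<iota> (sc c) * Q 0 0" using isc_comm[of "E 0 0" c] by (simp add: Q_def)
    also have "(\<iota> (sc c) * Q 0 0) *\<^sub>v v0 = f c"
      unfolding f_def using v0c v0W by (simp add: assoc_mult_mat_vec[of _ "m*s" "m*s" _ "m*s"] W_def)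
    finally show ?thesis using v0c by (auto simp: W_def V_def f_def)
  qed
  have inj: "inj f"
  proof (rule injI, rule ccontr)
    fix a b assume eq: "f a = f b" and ne: "a \<noteq> b"
    have "\<iota> (sc (a - b)) *\<^sub>v v0 = f a - f b"
      unfolding f_def sc_minus minus[OF sc_car sc_car]
      using v0c by (simp add: minus_mult_distrib_mat_vec[of _ "m*s" "m*s"])
    also have "\<dots> = 0\<^sub>v (m*s)"
    proof -
      have fb: "f b \<in> carrier_vec (m*s)" using fin[of b] by (auto simp: W_def V_def)
      show ?thesis unfolding eq using fb by (intro eq_vecI) auto
    qed
    finally have z: "\<iota> (sc (a - b)) *\<^sub>v v0 = 0\<^sub>v (m*s)" .
    have "v0 = \<iota> (sc (inverse (a - b)) * sc (a - b)) *\<^sub>v v0"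
      using ne v0c by (simp add: sc_mult sc_one one)
    also have "\<dots> = \<iota> (sc (inverse (a - b))) *\<^sub>v (\<iota> (sc (a - b)) *\<^sub>v v0)"
      using v0c by (simp add: mult assoc_mult_mat_vec[of _ "m*s" "m*s" _ "m*s"])
    also have "\<dots> = 0\<^sub>v (m*s)" using z by (simp add: mat_vec_zero)
    finally show False using nz by simp
  qed
  have imW: "range f = W"
    by (rule card_subset_eq[OF fW]) (use fin cW card_image[OF inj] in auto)
  have Zv0W: "Z *\<^sub>v v0 \<in> W"
  proof -
    have "Q 0 0 *\<^sub>v (Z *\<^sub>v v0) = (Q 0 0 * Z) *\<^sub>v v0"
      using v0c Zc by (simp add: assoc_mult_mat_vec[of _ "m*s" "m*s" _ "m*s"])
    also have "Q 0 0 * Z = Z * Q 0 0" using Zcomm[of "E 0 0"] by (simp add: Q_def)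
    also have "(Z * Q 0 0) *\<^sub>v v0 = Z *\<^sub>v v0"
      using v0c v0W Zc by (simp add: assoc_mult_mat_vec[of _ "m*s" "m*s" _ "m*s"] W_def)
    finally show ?thesis using v0c Zc by (auto simp: W_def V_def)
  qed
  then obtain l where l: "Z *\<^sub>v v0 = f l" using imW by blast
  have "Z = \<iota> (sc l)"
  proof (rule agree[OF Zc isc_car Zcomm isc_comm])
    fix w assume "w \<in> W"
    then obtain u where w: "w = f u" using imW by blast
    have "Z *\<^sub>v w = (Z * \<iota> (sc u)) *\<^sub>v v0"
      unfolding w f_def using v0c Zc by (simp add: assoc_mult_mat_vec[of _ "m*s" "m*s" _ "m*s"])
    also have "\<dots> = (\<iota> (sc u) * Z) *\<^sub>v v0" using Zcomm[of "sc u"] by simp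
    also have "\<dots> = \<iota> (sc u) *\<^sub>v f l"
      using v0c Zc l by (simp add: assoc_mult_mat_vec[of _ "m*s" "m*s" _ "m*s"])
    also have "\<dots> = (\<iota> (sc u) * \<iota> (sc l)) *\<^sub>v v0"
      unfolding f_def using v0c by (simp add: assoc_mult_mat_vec[of _ "m*s" "m*s" _ "m*s"])
    also have "\<iota> (sc u) * \<iota> (sc l) = \<iota> (sc l) * \<iota> (sc u)" using isc_comm[of "sc l" u] by simp
    also have "(\<iota> (sc l) * \<iota> (sc u)) *\<^sub>v v0 = \<iota> (sc l) *\<^sub>v w"
      unfolding w f_def using v0c by (simp add: assoc_mult_mat_vec[of _ "m*s" "m*s" _ "m*s"])
    finally show "Z *\<^sub>v w = \<iota> (sc l) *\<^sub>v w" .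
  qed
  then show ?thesis by blast
qed

end

lemmas asc = assoc_mult_mat[of _ n n _ n _ n] for n


lemma aut_zero: "field_aut f \<Longrightarrow> f 0 = 0"
proof -
  assume a: "field_aut f"
  have "f 0 + f 0 = f 0" using a unfolding field_aut_def by (metis add_0)
  then show "f 0 = 0" by (metis add_cancel_right_right)
qed

lemma aut_sum: "field_aut f \<Longrightarrow> f (sum g A) = sum (\<lambda>x. f (g x)) A"
  using sum_comp_morphism[of f g A] aut_zero[of f] by (simp add: field_aut_def o_def)

lemma map_mat_mult:
  assumes f: "field_aut f" and A: "A \<in> carrier_mat n k" and B: "B \<in> carrier_mat k l"
  shows "map_mat f (A * B) = map_mat f A * map_mat f B"
proof (rule eq_matI)
  fix i j assume i: "i < dim_row (map_mat f A * map_mat f B)" and j: "j < dim_col (map_mat f A * map_mat f B)"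
  have i': "i < n" and j': "j < l" using i j A B by auto
  have "map_mat f (A * B) $$ (i,j) = f (\<Sum>t\<in>{0..<k}. A $$ (i,t) * B $$ (t,j))"
    using i' j' A B by (simp add: scalar_prod_def)
  also have "\<dots> = (\<Sum>t\<in>{0..<k}. f (A $$ (i,t)) * f (B $$ (t,j)))"
    using f by (simp add: aut_sum) (simp add: field_aut_def)
  also have "\<dots> = (map_mat f A * map_mat f B) $$ (i,j)"
    using i' j' A B by (simp add: scalar_prod_def)
  finally show "map_mat f (A * B) $$ (i,j) = (map_mat f A * map_mat f B) $$ (i,j)" .
qed auto

lemma map_mat_one: "field_aut f \<Longrightarrow> map_mat f (1\<^sub>m n) = 1\<^sub>m n"
  by (intro eq_matI) (auto simp: field_aut_def aut_zero)

lemma map_mat_sc: "field_aut f \<Longrightarrow> map_mat f (c \<cdot>\<^sub>m 1\<^sub>m n) = f c \<cdot>\<^sub>m 1\<^sub>m n"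
  by (intro eq_matI) (auto simp: field_aut_def aut_zero)

lemma map_mat_comp: "map_mat (f \<circ> g) A = map_mat f (map_mat g A)"
  by (intro eq_matI) auto

lemma aut_comp: "field_aut f \<Longrightarrow> field_aut g \<Longrightarrow> field_aut (f \<circ> g)"
  unfolding field_aut_def by (auto intro: bij_comp)

lemma inv_ex:
  assumes A: "A \<in> carrier_mat n n" and inv: "invertible_mat A"
  shows "\<exists>B \<in> carrier_mat n n. A * B = 1\<^sub>m n \<and> B * A = 1\<^sub>m n"
proof -
  obtain B where AB: "A * B = 1\<^sub>m (dim_row A)" and BA: "B * A = 1\<^sub>m (dim_row B)"
    using inv unfolding invertible_mat_def inverts_mat_def by blast
  have "dim_col B = n" using arg_cong[OF AB, of dim_col] A by simp
  moreover have "dim_row B = n" using arg_cong[OF BA, of dim_col] A by simp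
  ultimately show ?thesis using AB BA A by (intro bexI[of _ B]) auto
qed

lemma inv_mk:
  assumes A: "A \<in> carrier_mat n n" and B: "B \<in> carrier_mat n n"
    and "A * B = 1\<^sub>m n" "B * A = 1\<^sub>m n"
  shows "invertible_mat A"
  using assms unfolding invertible_mat_def inverts_mat_def square_mat.simps by auto

lemma inv_mult:
  assumes A: "A \<in> carrier_mat n n" "invertible_mat A" and B: "B \<in> carrier_mat n n" "invertible_mat B"
  shows "invertible_mat (A * B)"
proof -
  obtain A' where A': "A' \<in> carrier_mat n n" "A * A' = 1\<^sub>m n" "A' * A = 1\<^sub>m n" using inv_ex[OF A] by blast
  obtain B' where B': "B' \<in> carrier_mat n n" "B * B' = 1\<^sub>m n" "B' * B = 1\<^sub>m n" using inv_ex[OF B] by blast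
  have "(A * B) * (B' * A') = A * ((B * B') * A')" using A(1) B(1) A'(1) B'(1) by (simp add: asc carrier_matD)
  also have "\<dots> = 1\<^sub>m n" using A' B' A by (simp add: carrier_matD)
  finally have 1: "(A * B) * (B' * A') = 1\<^sub>m n" .
  have "(B' * A') * (A * B) = B' * ((A' * A) * B)" using A(1) B(1) A'(1) B'(1) by (simp add: asc carrier_matD)
  also have "\<dots> = 1\<^sub>m n" using A' B' B by (simp add: carrier_matD)
  finally have 2: "(B' * A') * (A * B) = 1\<^sub>m n" .
  show ?thesis by (rule inv_mk[OF _ _ 1 2]) (use A B A' B' in auto)
qed

lemma map_inv:
  assumes f: "field_aut f" and A: "A \<in> carrier_mat n n" "invertible_mat A"
  shows "invertible_mat (map_mat f A)"
proof -
  obtain A' where A': "A' \<in> carrier_mat n n" "A * A' = 1\<^sub>m n" "A' * A = 1\<^sub>m n" using inv_ex[OF A] by blast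
  have 1: "map_mat f A * map_mat f A' = 1\<^sub>m n"
    using map_mat_mult[OF f A(1) A'(1), symmetric] A' map_mat_one[OF f] by simp
  have 2: "map_mat f A' * map_mat f A = 1\<^sub>m n"
    using map_mat_mult[OF f A'(1) A(1), symmetric] A' map_mat_one[OF f] by simp
  show ?thesis by (rule inv_mk[OF _ _ 1 2]) (use A A' in auto)
qed

lemma conj_swap:
  fixes Y :: "'a::comm_ring_1 mat"
  assumes Y: "Y \<in> carrier_mat n n" and B: "B \<in> carrier_mat n n" and YB: "Y * B = 1\<^sub>m n" and BY: "B * Y = 1\<^sub>m n"
    and P: "P \<in> carrier_mat n n" and Q: "Q \<in> carrier_mat n n" and e: "Y * P = Q * Y"
  shows "B * Q = P * B"
proof -
  have "B * Q = B * Q * (Y * B)" unfolding YB by (rule right_mult_one_mat[OF mult_carrier_mat[OF B Q], symmetric])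
  also have "\<dots> = B * (Q * Y) * B" using Y B Q by (simp add: asc)
  also have "\<dots> = B * (Y * P) * B" using e by simp
  also have "\<dots> = (B * Y) * P * B" using Y B P by (simp add: asc)
  also have "\<dots> = P * B" using BY P B by (simp add: carrier_matD)
  finally show ?thesis .
qed

lemma zcomm:
  fixes Y :: "'a::comm_ring_1 mat"
  assumes Y: "Y \<in> carrier_mat n n" and B: "B \<in> carrier_mat n n" and YB: "Y * B = 1\<^sub>m n" and BY: "B * Y = 1\<^sub>m n"
    and K: "K \<in> carrier_mat n n"
    and P: "P \<in> carrier_mat n n" and Q: "Q \<in> carrier_mat n n" and e: "Y * P = Q * Y"
    and eK: "K * P = Q * K"
  shows "(B * K) * P = P * (B * K)"
proof -
  have BQ: "B * Q = P * B" by (rule conj_swap[OF Y B YB BY P Q e])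
  have "(B * K) * P = B * (K * P)" using B K P by (simp add: asc)
  also have "\<dots> = (B * Q) * K" using eK B K Q by (simp add: asc)
  also have "\<dots> = P * (B * K)" using BQ B K P by (simp add: asc)
  finally show ?thesis .
qed

lemma comm_add:
  assumes "Z \<in> carrier_mat n n" "A \<in> carrier_mat n n" "C \<in> carrier_mat n n"
    "Z * A = A * Z" "Z * C = C * Z"
  shows "Z * (A + C) = (A + C) * Z"
  using assms by (simp add: mult_add_distrib_mat[of _ n n] add_mult_distrib_mat[of _ n n])

lemma comm_mult:
  assumes "Z \<in> carrier_mat n n" "A \<in> carrier_mat n n" "C \<in> carrier_mat n n"
    "Z * A = A * Z" "Z * C = C * Z"
  shows "Z * (A * C) = (A * C) * Z"
proof -
  have "Z * (A * C) = (Z * A) * C" using assms(1-3) by (simp add: asc)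
  also have "\<dots> = (A * Z) * C" using assms by simp
  also have "\<dots> = A * (Z * C)" using assms(1-3) by (simp add: asc)
  also have "\<dots> = A * (C * Z)" using assms by simp
  also have "\<dots> = (A * C) * Z" using assms(1-3) by (simp add: asc)
  finally show ?thesis .
qed


theorem mainTheorem9:
  fixes G :: "('g, 'b) monoid_scheme" and N :: "'g set"
    and p m s :: nat
    and X :: "'g \<Rightarrow> 'e::{finite,field} mat"
    and \<sigma> :: "'g \<Rightarrow> 'e \<Rightarrow> 'e"
    and T :: "'g \<Rightarrow> 'e mat"
    and \<iota> :: "'e mat \<Rightarrow> 'f::{finite,field} mat"
    and Y :: "'g \<Rightarrow> 'f mat"
  assumes grp: "group G" and finG: "finite (carrier G)" and nrm: "N \<lhd> G"
    and p: "prime p" and Fp: "card (UNIV :: 'f set) = p" and charE: "of_nat p = (0::'e)"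
    and s: "card (UNIV :: 'e set) = p ^ s"
    and m: "m > 0"
    and X_rep: "is_rep G N m X"
    and X_irr: "abs_irreducible N m X"
    and E_gen: "\<And>K. is_subfield K \<Longrightarrow> (\<forall>n\<in>N. mat_tr (X n) \<in> K) \<Longrightarrow> K = (UNIV :: 'e set)"
    and \<sigma>_aut: "\<And>g. g \<in> carrier G \<Longrightarrow> field_aut (\<sigma> g)"
    and T_inv: "\<And>g. g \<in> carrier G \<Longrightarrow> T g \<in> carrier_mat m m \<and> invertible_mat (T g)"
    and T_conj: "\<And>g n. g \<in> carrier G \<Longrightarrow> n \<in> N \<Longrightarrow>
        map_mat (\<sigma> g) (X (g \<otimes>\<^bsub>G\<^esub> n \<otimes>\<^bsub>G\<^esub> inv\<^bsub>G\<^esub> g)) * T g = T g * X n"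
    and \<sigma>_unique: "\<And>g \<tau> S. g \<in> carrier G \<Longrightarrow> field_aut \<tau> \<Longrightarrow>
        S \<in> carrier_mat m m \<Longrightarrow> invertible_mat S \<Longrightarrow>
        (\<forall>n\<in>N. map_mat \<tau> (X (g \<otimes>\<^bsub>G\<^esub> n \<otimes>\<^bsub>G\<^esub> inv\<^bsub>G\<^esub> g)) * S = S * X n) \<Longrightarrow> \<tau> = \<sigma> g"
    and \<iota>_carrier: "\<And>x. x \<in> carrier_mat m m \<Longrightarrow> \<iota> x \<in> carrier_mat (m * s) (m * s)"
    and \<iota>_add: "\<And>x y. x \<in> carrier_mat m m \<Longrightarrow> y \<in> carrier_mat m m \<Longrightarrow> \<iota> (x + y) = \<iota> x + \<iota> y"
    and \<iota>_mult: "\<And>x y. x \<in> carrier_mat m m \<Longrightarrow> y \<in> carrier_mat m m \<Longrightarrow> \<iota> (x * y) = \<iota> x * \<iota> y"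
    and \<iota>_one: "\<iota> (1\<^sub>m m) = 1\<^sub>m (m * s)"
    and \<iota>_inj: "inj_on \<iota> (carrier_mat m m)"
    and Y_GL: "\<And>g. g \<in> carrier G \<Longrightarrow> Y g \<in> carrier_mat (m * s) (m * s) \<and> invertible_mat (Y g)"
    and Y_conj: "\<And>g x y. g \<in> carrier G \<Longrightarrow> x \<in> carrier_mat m m \<Longrightarrow> y \<in> carrier_mat m m \<Longrightarrow>
        T g * y = map_mat (\<sigma> g) x * T g \<Longrightarrow> \<iota> x * Y g = Y g * \<iota> y"
    and Y_N: "\<And>n. n \<in> N \<Longrightarrow> Y n = \<iota> (X n)"
    and Y_right: "\<And>g n. g \<in> carrier G \<Longrightarrow> n \<in> N \<Longrightarrow> Y (g \<otimes>\<^bsub>G\<^esub> n) = Y g * Y n"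
    and Y_left: "\<And>g n. g \<in> carrier G \<Longrightarrow> n \<in> N \<Longrightarrow> Y (n \<otimes>\<^bsub>G\<^esub> g) = Y n * Y g"
  shows "\<exists>\<alpha> :: 'g \<Rightarrow> 'g \<Rightarrow> 'e.
     (\<forall>g\<in>carrier G. \<forall>h\<in>carrier G.
        \<alpha> g h \<noteq> 0 \<and> Y g * Y h = Y (g \<otimes>\<^bsub>G\<^esub> h) * \<iota> (\<alpha> g h \<cdot>\<^sub>m 1\<^sub>m m) \<and>
        (\<forall>a. a \<noteq> 0 \<and> Y g * Y h = Y (g \<otimes>\<^bsub>G\<^esub> h) * \<iota> (a \<cdot>\<^sub>m 1\<^sub>m m) \<longrightarrow> a = \<alpha> g h)) \<and>
     (\<forall>g\<in>carrier G. \<forall>h\<in>carrier G. \<forall>k\<in>carrier G.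
        \<alpha> (g \<otimes>\<^bsub>G\<^esub> h) k * \<sigma> k (\<alpha> g h) = \<alpha> g (h \<otimes>\<^bsub>G\<^esub> k) * \<alpha> h k)"
proof -
  interpret G: group G by (rule grp)
  interpret I: emb \<iota> m s
    by unfold_locales (use \<iota>_carrier \<iota>_add \<iota>_mult \<iota>_one in auto)
  let ?n = "m * s"
  have NG: "N \<subseteq> carrier G" using normal_imp_subgroup[OF nrm] subgroup.subset by blast
  have conjN: "\<And>a n. a \<in> carrier G \<Longrightarrow> n \<in> N \<Longrightarrow> a \<otimes>\<^bsub>G\<^esub> n \<otimes>\<^bsub>G\<^esub> inv\<^bsub>G\<^esub> a \<in> N"
    using normal.inv_op_closed2[OF nrm] by blast
  have Xc: "\<And>n. n \<in> N \<Longrightarrow> X n \<in> carrier_mat m m" using X_rep by (simp add: is_rep_def)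
  have iXc: "\<And>n. n \<in> N \<Longrightarrow> \<iota> (X n) \<in> carrier_mat ?n ?n" using Xc I.car by blast
  have Tc: "\<And>g. g \<in> carrier G \<Longrightarrow> T g \<in> carrier_mat m m" using T_inv by blast
  have Yc: "\<And>g. g \<in> carrier G \<Longrightarrow> Y g \<in> carrier_mat ?n ?n" using Y_GL by blast
  have cardE: "card (UNIV::'e set) = card (UNIV::'f set) ^ s" using Fp s by simp
  have "card {0, 1::'e} \<le> card (UNIV::'e set)" by (rule card_mono) auto
  then have "2 \<le> p ^ s" using s by simp
  then have s0: "s > 0" by (cases s) auto
  then have n0: "?n > 0" using m by simp
  have sc_inj: "\<And>a b. \<iota> (I.sc a) = \<iota> (I.sc b) \<Longrightarrow> a = b"
  proof -
    fix a b assume "\<iota> (I.sc a) = \<iota> (I.sc b)"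
    then have "I.sc a = I.sc b" using \<iota>_inj by (auto simp: inj_on_def)
    then have "I.sc a $$ (0,0) = I.sc b $$ (0,0)" by simp
    then show "a = b" using m by (simp add: I.sc_def)
  qed
  have isc_mult: "\<And>a b. \<iota> (I.sc a) * \<iota> (I.sc b) = \<iota> (I.sc (a * b))"
    by (simp add: \<iota>_mult[symmetric] I.sc_mult)
  have \<sigma>comp: "\<sigma> (g \<otimes>\<^bsub>G\<^esub> h) = \<sigma> h \<circ> \<sigma> g" if g: "g \<in> carrier G" and h: "h \<in> carrier G" for g h
  proof -
    have ag: "field_aut (\<sigma> g)" and ah: "field_aut (\<sigma> h)" using \<sigma>_aut g h by auto
    have Tg: "T g \<in> carrier_mat m m" "invertible_mat (T g)" using T_inv g by auto
    have Th: "T h \<in> carrier_mat m m" "invertible_mat (T h)" using T_inv h by auto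
    have mTg: "map_mat (\<sigma> h) (T g) \<in> carrier_mat m m" using Tg by simp
    show ?thesis
    proof (rule \<sigma>_unique[symmetric, of "g \<otimes>\<^bsub>G\<^esub> h" _ "map_mat (\<sigma> h) (T g) * T h"])
      show "g \<otimes>\<^bsub>G\<^esub> h \<in> carrier G" using g h by simp
      show "field_aut (\<sigma> h \<circ> \<sigma> g)" using aut_comp[OF ah ag] .
      show "map_mat (\<sigma> h) (T g) * T h \<in> carrier_mat m m" using mTg Th by simp
      show "invertible_mat (map_mat (\<sigma> h) (T g) * T h)"
        using inv_mult[OF mTg map_inv[OF ah Tg] Th] .
      show "\<forall>n\<in>N. map_mat (\<sigma> h \<circ> \<sigma> g) (X (g \<otimes>\<^bsub>G\<^esub> h \<otimes>\<^bsub>G\<^esub> n \<otimes>\<^bsub>G\<^esub> inv\<^bsub>G\<^esub> (g \<otimes>\<^bsub>G\<^esub> h))) * (map_mat (\<sigma> h) (T g) * T h) =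
          map_mat (\<sigma> h) (T g) * T h * X n"
      proof
        fix n assume n: "n \<in> N"
        define n' where "n' = h \<otimes>\<^bsub>G\<^esub> n \<otimes>\<^bsub>G\<^esub> inv\<^bsub>G\<^esub> h"
        have n'N: "n' \<in> N" using conjN[OF h n] by (simp add: n'_def)
        have nG: "n \<in> carrier G" using n NG by auto
        have eq: "g \<otimes>\<^bsub>G\<^esub> h \<otimes>\<^bsub>G\<^esub> n \<otimes>\<^bsub>G\<^esub> inv\<^bsub>G\<^esub> (g \<otimes>\<^bsub>G\<^esub> h) = g \<otimes>\<^bsub>G\<^esub> n' \<otimes>\<^bsub>G\<^esub> inv\<^bsub>G\<^esub> g"
          using g h nG by (simp add: n'_def G.m_assoc G.inv_mult_group)
        define X1 where "X1 = X (g \<otimes>\<^bsub>G\<^esub> n' \<otimes>\<^bsub>G\<^esub> inv\<^bsub>G\<^esub> g)"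
        have X1c: "X1 \<in> carrier_mat m m" unfolding X1_def using Xc conjN[OF g n'N] .
        have Xn'c: "X n' \<in> carrier_mat m m" using Xc n'N .
        have Xnc: "X n \<in> carrier_mat m m" using Xc n .
        have c1: "map_mat (\<sigma> g) X1 * T g = T g * X n'" unfolding X1_def by (rule T_conj[OF g n'N])
        have c2: "map_mat (\<sigma> h) (map_mat (\<sigma> g) X1) * map_mat (\<sigma> h) (T g) = map_mat (\<sigma> h) (T g) * map_mat (\<sigma> h) (X n')"
          using arg_cong[OF c1, of "map_mat (\<sigma> h)"]
          by (simp add: map_mat_mult[OF ah _ Tg(1), of _ m] map_mat_mult[OF ah Tg(1) Xn'c] X1c)
        have c3: "map_mat (\<sigma> h) (X n') * T h = T h * X n" unfolding n'_def by (rule T_conj[OF h n])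
        let ?M1 = "map_mat (\<sigma> h) (map_mat (\<sigma> g) X1)"
        let ?A = "map_mat (\<sigma> h) (T g)"
        let ?Bm = "map_mat (\<sigma> h) (X n')"
        have M1c: "?M1 \<in> carrier_mat m m" using X1c by simp
        have Bmc: "?Bm \<in> carrier_mat m m" using Xn'c by simp
        have "map_mat (\<sigma> h \<circ> \<sigma> g) X1 * (?A * T h) = (?M1 * ?A) * T h"
          unfolding map_mat_comp using M1c mTg Th(1) by (simp add: asc[where n=m])
        also have "\<dots> = (?A * ?Bm) * T h" using c2 by simp
        also have "\<dots> = ?A * (?Bm * T h)" using mTg Bmc Th(1) by (simp add: asc[where n=m])
        also have "\<dots> = ?A * (T h * X n)" using c3 by simp
        also have "\<dots> = (?A * T h) * X n" using mTg Th(1) Xnc by (simp add: asc[where n=m])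
        finally show "map_mat (\<sigma> h \<circ> \<sigma> g) (X (g \<otimes>\<^bsub>G\<^esub> h \<otimes>\<^bsub>G\<^esub> n \<otimes>\<^bsub>G\<^esub> inv\<^bsub>G\<^esub> (g \<otimes>\<^bsub>G\<^esub> h))) * (?A * T h) = ?A * T h * X n"
          unfolding eq X1_def .
      qed
    qed
  qed
  have L1: "\<iota> (I.sc c) * Y g = Y g * \<iota> (I.sc (\<sigma> g c))" if g: "g \<in> carrier G" for g c
  proof (rule Y_conj[OF g])
    show "T g * I.sc (\<sigma> g c) = map_mat (\<sigma> g) (I.sc c) * T g"
      using map_mat_sc[OF \<sigma>_aut[OF g], of c m] I.sc_comm[OF Tc[OF g], of "\<sigma> g c"]
      by (simp add: I.sc_def)
  qed auto
  have L2: "Y a * \<iota> (X n) = \<iota> (X (a \<otimes>\<^bsub>G\<^esub> n \<otimes>\<^bsub>G\<^esub> inv\<^bsub>G\<^esub> a)) * Y a" if a: "a \<in> carrier G" and n: "n \<in> N" for a n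
  proof -
    have nG: "n \<in> carrier G" using n NG by auto
    have "a \<otimes>\<^bsub>G\<^esub> n = (a \<otimes>\<^bsub>G\<^esub> n \<otimes>\<^bsub>G\<^esub> inv\<^bsub>G\<^esub> a) \<otimes>\<^bsub>G\<^esub> a"
      using a nG by (simp add: G.m_assoc)
    then have "Y (a \<otimes>\<^bsub>G\<^esub> n) = Y (a \<otimes>\<^bsub>G\<^esub> n \<otimes>\<^bsub>G\<^esub> inv\<^bsub>G\<^esub> a) * Y a"
      using Y_left[OF a conjN[OF a n]] by simp
    then show ?thesis using Y_right[OF a n] Y_N[OF n] Y_N[OF conjN[OF a n]] by simp
  qed
  have alpha_ex: "\<exists>c. c \<noteq> 0 \<and> Y g * Y h = Y (g \<otimes>\<^bsub>G\<^esub> h) * \<iota> (I.sc c) \<and>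
      (\<forall>a. a \<noteq> 0 \<and> Y g * Y h = Y (g \<otimes>\<^bsub>G\<^esub> h) * \<iota> (I.sc a) \<longrightarrow> a = c)"
    if g: "g \<in> carrier G" and h: "h \<in> carrier G" for g h
  proof -
    have gh: "g \<otimes>\<^bsub>G\<^esub> h \<in> carrier G" using g h by simp
    obtain B where B: "B \<in> carrier_mat ?n ?n" "Y (g \<otimes>\<^bsub>G\<^esub> h) * B = 1\<^sub>m ?n" "B * Y (g \<otimes>\<^bsub>G\<^esub> h) = 1\<^sub>m ?n"
      using inv_ex[of "Y (g \<otimes>\<^bsub>G\<^esub> h)" ?n] Y_GL[OF gh] by blast
    define K where "K = Y g * Y h"
    have Kc: "K \<in> carrier_mat ?n ?n" unfolding K_def using mult_carrier_mat[OF Yc[OF g] Yc[OF h]] .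
    define Z where "Z = B * K"
    have Zc: "Z \<in> carrier_mat ?n ?n" unfolding Z_def using mult_carrier_mat[OF B(1) Kc] .
    have Ygh: "Y (g \<otimes>\<^bsub>G\<^esub> h) \<in> carrier_mat ?n ?n" using Yc gh .
    have Zsc: "Z * \<iota> (I.sc d) = \<iota> (I.sc d) * Z" for d
    proof -
      have "surj (\<sigma> (g \<otimes>\<^bsub>G\<^esub> h))" using \<sigma>_aut[OF gh] by (simp add: field_aut_def bij_def)
      then obtain c where d: "d = \<sigma> (g \<otimes>\<^bsub>G\<^esub> h) c" by (metis surjD)
      have e: "Y (g \<otimes>\<^bsub>G\<^esub> h) * \<iota> (I.sc d) = \<iota> (I.sc c) * Y (g \<otimes>\<^bsub>G\<^esub> h)"
        using L1[OF gh, of c] d by simp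
      have "\<iota> (I.sc c) * K = (\<iota> (I.sc c) * Y g) * Y h"
        unfolding K_def using Yc[OF g] Yc[OF h] by (simp add: asc[where n="m*s"])
      also have "\<dots> = (Y g * \<iota> (I.sc (\<sigma> g c))) * Y h" using L1[OF g] by simp
      also have "\<dots> = Y g * (\<iota> (I.sc (\<sigma> g c)) * Y h)" using Yc[OF g] Yc[OF h] by (simp add: asc[where n="m*s"])
      also have "\<dots> = Y g * (Y h * \<iota> (I.sc (\<sigma> h (\<sigma> g c))))" using L1[OF h] by simp
      also have "\<dots> = K * \<iota> (I.sc d)"
        unfolding K_def d \<sigma>comp[OF g h] using Yc[OF g] Yc[OF h] by (simp add: asc[where n="m*s"])
      finally have eK: "K * \<iota> (I.sc d) = \<iota> (I.sc c) * K" by simp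
      show ?thesis unfolding Z_def by (rule zcomm[OF Ygh B Kc I.isc_car I.isc_car e eK])
    qed
    have ZX: "Z * \<iota> (X n) = \<iota> (X n) * Z" if n: "n \<in> N" for n
    proof -
      define n'' where "n'' = (g \<otimes>\<^bsub>G\<^esub> h) \<otimes>\<^bsub>G\<^esub> n \<otimes>\<^bsub>G\<^esub> inv\<^bsub>G\<^esub> (g \<otimes>\<^bsub>G\<^esub> h)"
      have n''N: "n'' \<in> N" unfolding n''_def using conjN[OF gh n] .
      have nG: "n \<in> carrier G" using n NG by auto
      have eq: "n'' = g \<otimes>\<^bsub>G\<^esub> (h \<otimes>\<^bsub>G\<^esub> n \<otimes>\<^bsub>G\<^esub> inv\<^bsub>G\<^esub> h) \<otimes>\<^bsub>G\<^esub> inv\<^bsub>G\<^esub> g"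
        unfolding n''_def using g h nG by (simp add: G.m_assoc G.inv_mult_group)
      have e: "Y (g \<otimes>\<^bsub>G\<^esub> h) * \<iota> (X n) = \<iota> (X n'') * Y (g \<otimes>\<^bsub>G\<^esub> h)"
        unfolding n''_def by (rule L2[OF gh n])
      have hn: "h \<otimes>\<^bsub>G\<^esub> n \<otimes>\<^bsub>G\<^esub> inv\<^bsub>G\<^esub> h \<in> N" using conjN[OF h n] .
      have "K * \<iota> (X n) = Y g * (Y h * \<iota> (X n))"
        unfolding K_def using Yc[OF g] Yc[OF h] iXc[OF n] by (simp add: asc[where n="m*s"])
      also have "\<dots> = Y g * (\<iota> (X (h \<otimes>\<^bsub>G\<^esub> n \<otimes>\<^bsub>G\<^esub> inv\<^bsub>G\<^esub> h)) * Y h)"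
        using L2[OF h n] by simp
      also have "\<dots> = (Y g * \<iota> (X (h \<otimes>\<^bsub>G\<^esub> n \<otimes>\<^bsub>G\<^esub> inv\<^bsub>G\<^esub> h))) * Y h"
        using Yc[OF g] Yc[OF h] iXc[OF hn] by (simp add: asc[where n="m*s"])
      also have "\<dots> = (\<iota> (X n'') * Y g) * Y h" unfolding eq using L2[OF g hn] by simp
      also have "\<dots> = \<iota> (X n'') * K"
        unfolding K_def using Yc[OF g] Yc[OF h] iXc[OF n''N] by (simp add: asc[where n="m*s"])
      finally have eK: "K * \<iota> (X n) = \<iota> (X n'') * K" .
      show ?thesis unfolding Z_def by (rule zcomm[OF Ygh B Kc iXc[OF n] iXc[OF n''N] e eK])
    qed
    have finN: "finite N" using finite_subset[OF NG finG] .
    have Zall: "Z * \<iota> M = \<iota> M * Z" if M: "M \<in> carrier_mat m m" for M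
    proof -
      obtain c where c: "\<forall>i<m. \<forall>j<m. M $$ (i,j) = (\<Sum>n\<in>N. c n * X n $$ (i,j))"
        using X_irr M unfolding abs_irreducible_def by blast
      define MS where "MS K = mat m m (\<lambda>(i,j). \<Sum>n\<in>K. c n * X n $$ (i,j))" for K
      have MSc: "MS K \<in> carrier_mat m m" for K by (simp add: MS_def)
      have "K \<subseteq> N \<Longrightarrow> Z * \<iota> (MS K) = \<iota> (MS K) * Z" if "finite K" for K
        using that
      proof (induction K rule: finite_induct)
        case empty
        have "MS {} = 0\<^sub>m m m" unfolding MS_def by (intro eq_matI) auto
        then show ?case using Zc by (simp add: I.zero)
      next
        case (insert a K)
        have aN: "a \<in> N" using insert by auto
        have "MS (insert a K) = I.sc (c a) * X a + MS K"
        proof (rule eq_matI)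
          fix i j assume "i < dim_row (I.sc (c a) * X a + MS K)" "j < dim_col (I.sc (c a) * X a + MS K)"
          then have ij: "i < m" "j < m" by (auto simp: MS_def)
          have "I.sc (c a) * X a = c a \<cdot>\<^sub>m X a"
            unfolding I.sc_def using Xc[OF aN] by (simp add: mult_smult_assoc_mat[of _ m m _ m])
          then show "MS (insert a K) $$ (i, j) = (I.sc (c a) * X a + MS K) $$ (i, j)"
            using ij insert Xc[OF aN] by (simp add: MS_def)
        qed (auto simp: MS_def)
        moreover have "Z * \<iota> (I.sc (c a) * X a + MS K) = \<iota> (I.sc (c a) * X a + MS K) * Z"
        proof -
          have p: "Z * \<iota> (I.sc (c a) * X a) = \<iota> (I.sc (c a) * X a) * Z"
            unfolding \<iota>_mult[OF I.sc_car Xc[OF aN]]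
            by (rule comm_mult[OF Zc I.isc_car iXc[OF aN] Zsc ZX[OF aN]])
          show ?thesis
            unfolding \<iota>_add[OF mult_carrier_mat[OF I.sc_car Xc[OF aN]] MSc]
            by (rule comm_add[OF Zc _ I.car[OF MSc] p]) (use insert I.car[OF mult_carrier_mat[OF I.sc_car Xc[OF aN]]] in auto)
        qed
        ultimately show ?case by simp
      qed
      then have "Z * \<iota> (MS N) = \<iota> (MS N) * Z" using finN by simp
      moreover have "MS N = M" unfolding MS_def using c M by (intro eq_matI) auto
      ultimately show ?thesis by simp
    qed
    obtain c where Zeq: "Z = \<iota> (I.sc c)" using I.central[OF cardE m Zc Zall] by blast
    have KZ: "K = Y (g \<otimes>\<^bsub>G\<^esub> h) * Z"
    proof -
      have "Y (g \<otimes>\<^bsub>G\<^esub> h) * Z = (Y (g \<otimes>\<^bsub>G\<^esub> h) * B) * K" unfolding Z_def using Ygh B(1) Kc by (simp add: asc[where n="m*s"])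
      then show ?thesis using B(2) left_mult_one_mat[OF Kc] by simp
    qed
    have c0: "c \<noteq> 0"
    proof
      assume "c = 0"
      then have "I.sc c = 0\<^sub>m m m" unfolding I.sc_def by (intro eq_matI) auto
      then have K0: "K = 0\<^sub>m ?n ?n" using KZ Zeq right_mult_zero_mat[OF Ygh] by (simp add: I.zero)
      have "invertible_mat K" unfolding K_def using inv_mult Y_GL[OF g] Y_GL[OF h] by blast
      then obtain K' where K': "K' \<in> carrier_mat ?n ?n" "K * K' = 1\<^sub>m ?n"
        using inv_ex[OF Kc] by blast
      have "(1\<^sub>m ?n :: 'f mat) = 0\<^sub>m ?n ?n" using K' K0 left_mult_zero_mat[OF K'(1)] by simp
      then have "(1\<^sub>m ?n :: 'f mat) $$ (0,0) = 0\<^sub>m ?n ?n $$ (0,0)" by simp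
      then show False using n0 by simp
    qed
    show ?thesis
    proof (intro exI[of _ c] conjI allI impI)
      show "c \<noteq> 0" by (rule c0)
      show "Y g * Y h = Y (g \<otimes>\<^bsub>G\<^esub> h) * \<iota> (I.sc c)" using KZ Zeq K_def by simp
      fix a assume a: "a \<noteq> 0 \<and> Y g * Y h = Y (g \<otimes>\<^bsub>G\<^esub> h) * \<iota> (I.sc a)"
      have "Z = B * (Y (g \<otimes>\<^bsub>G\<^esub> h) * \<iota> (I.sc a))" unfolding Z_def K_def using a by simp
      also have "\<dots> = (B * Y (g \<otimes>\<^bsub>G\<^esub> h)) * \<iota> (I.sc a)" using B(1) Ygh by (simp add: asc[where n="m*s"])
      also have "\<dots> = \<iota> (I.sc a)" using B(3) left_mult_one_mat[OF I.isc_car] by simp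
      finally have "Z = \<iota> (I.sc a)" .
      then show "a = c" using Zeq sc_inj by simp
    qed
  qed
  define \<alpha> where "\<alpha> g h = (SOME c. c \<noteq> 0 \<and> Y g * Y h = Y (g \<otimes>\<^bsub>G\<^esub> h) * \<iota> (I.sc c) \<and>
      (\<forall>a. a \<noteq> 0 \<and> Y g * Y h = Y (g \<otimes>\<^bsub>G\<^esub> h) * \<iota> (I.sc a) \<longrightarrow> a = c))" for g h
  have \<alpha>: "\<alpha> g h \<noteq> 0 \<and> Y g * Y h = Y (g \<otimes>\<^bsub>G\<^esub> h) * \<iota> (I.sc (\<alpha> g h)) \<and>
      (\<forall>a. a \<noteq> 0 \<and> Y g * Y h = Y (g \<otimes>\<^bsub>G\<^esub> h) * \<iota> (I.sc a) \<longrightarrow> a = \<alpha> g h)"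
    if "g \<in> carrier G" "h \<in> carrier G" for g h
    unfolding \<alpha>_def by (rule someI_ex[OF alpha_ex[OF that]])
  have cocycle: "\<alpha> (g \<otimes>\<^bsub>G\<^esub> h) k * \<sigma> k (\<alpha> g h) = \<alpha> g (h \<otimes>\<^bsub>G\<^esub> k) * \<alpha> h k"
    if g: "g \<in> carrier G" and h: "h \<in> carrier G" and k: "k \<in> carrier G" for g h k
  proof -
    have gh: "g \<otimes>\<^bsub>G\<^esub> h \<in> carrier G" and hk: "h \<otimes>\<^bsub>G\<^esub> k \<in> carrier G" using g h k by auto
    have ghk: "g \<otimes>\<^bsub>G\<^esub> h \<otimes>\<^bsub>G\<^esub> k = g \<otimes>\<^bsub>G\<^esub> (h \<otimes>\<^bsub>G\<^esub> k)" using g h k by (simp add: G.m_assoc)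
    let ?Y = "Y (g \<otimes>\<^bsub>G\<^esub> h \<otimes>\<^bsub>G\<^esub> k)"
    have Yghk: "?Y \<in> carrier_mat ?n ?n" "invertible_mat ?Y" using Y_GL[of "g \<otimes>\<^bsub>G\<^esub> h \<otimes>\<^bsub>G\<^esub> k"] gh k by auto
    have "(Y g * Y h) * Y k = Y (g \<otimes>\<^bsub>G\<^esub> h) * (\<iota> (I.sc (\<alpha> g h)) * Y k)"
      using \<alpha>[OF g h] Yc gh k by (simp add: asc[where n="m*s"])
    also have "\<dots> = (Y (g \<otimes>\<^bsub>G\<^esub> h) * Y k) * \<iota> (I.sc (\<sigma> k (\<alpha> g h)))"
      using L1[OF k] Yc gh k by (simp add: asc[where n="m*s"])
    also have "\<dots> = ?Y * (\<iota> (I.sc (\<alpha> (g \<otimes>\<^bsub>G\<^esub> h) k)) * \<iota> (I.sc (\<sigma> k (\<alpha> g h))))"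
      using \<alpha>[OF gh k] Yc[of "g \<otimes>\<^bsub>G\<^esub> h \<otimes>\<^bsub>G\<^esub> k"] gh k by (simp add: asc[where n="m*s"])
    finally have e1: "(Y g * Y h) * Y k = ?Y * \<iota> (I.sc (\<alpha> (g \<otimes>\<^bsub>G\<^esub> h) k * \<sigma> k (\<alpha> g h)))"
      by (simp add: isc_mult)
    have "Y g * (Y h * Y k) = (Y g * Y (h \<otimes>\<^bsub>G\<^esub> k)) * \<iota> (I.sc (\<alpha> h k))"
      using \<alpha>[OF h k] Yc g hk by (simp add: asc[where n="m*s"])
    also have "\<dots> = ?Y * (\<iota> (I.sc (\<alpha> g (h \<otimes>\<^bsub>G\<^esub> k))) * \<iota> (I.sc (\<alpha> h k)))"
      unfolding ghk using \<alpha>[OF g hk] Yc[of "g \<otimes>\<^bsub>G\<^esub> (h \<otimes>\<^bsub>G\<^esub> k)"] g hk by (simp add: asc[where n="m*s"])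
    finally have e2: "Y g * (Y h * Y k) = ?Y * \<iota> (I.sc (\<alpha> g (h \<otimes>\<^bsub>G\<^esub> k) * \<alpha> h k))"
      by (simp add: isc_mult)
    have "(Y g * Y h) * Y k = Y g * (Y h * Y k)" using Yc g h k by (simp add: asc[where n="m*s"])
    then have e: "?Y * \<iota> (I.sc (\<alpha> (g \<otimes>\<^bsub>G\<^esub> h) k * \<sigma> k (\<alpha> g h))) = ?Y * \<iota> (I.sc (\<alpha> g (h \<otimes>\<^bsub>G\<^esub> k) * \<alpha> h k))"
      using e1 e2 by simp
    obtain B where B: "B \<in> carrier_mat ?n ?n" "B * ?Y = 1\<^sub>m ?n" using inv_ex[OF Yghk] by blast
    have "\<iota> (I.sc a) = B * (?Y * \<iota> (I.sc a))" for a
    proof -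
      have "B * (?Y * \<iota> (I.sc a)) = (B * ?Y) * \<iota> (I.sc a)" using B(1) Yghk(1) by (simp add: asc[where n="m*s"])
      then show ?thesis using B(2) left_mult_one_mat[OF I.isc_car] by simp
    qed
    then have "\<iota> (I.sc (\<alpha> (g \<otimes>\<^bsub>G\<^esub> h) k * \<sigma> k (\<alpha> g h))) = \<iota> (I.sc (\<alpha> g (h \<otimes>\<^bsub>G\<^esub> k) * \<alpha> h k))"
      using e by metis
    then show ?thesis by (rule sc_inj)
  qed
  show ?thesis
    apply (rule exI[of _ \<alpha>], rule conjI)
    subgoal using \<alpha> unfolding I.sc_def by blast
    subgoal using cocycle by blast
    done
qed

end
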